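(* Let $c=(c_k)_{k\ge1}$ be a sequence of complex numbers with $c_k\to0$ as $k\to\infty$. Then $$\|T_c\|\le\sum_{k=1}^\infty\sqrt{k(k+1)}\,|c_{k+2}-2c_{k+1}+c_k|.$$
   Context: For a complex sequence $c=(c_k)_{k\ge1}$, $T_c$ is the infinite matrix indexed by $j,k\ge1$ with entries $(T_c)_{jk}=c_k$ if $j=k$, $(T_c)_{jk}=c_k-c_{k-1}$ if $j<k$, and $(T_c)_{jk}=0$ if $j>k$. $\|T_c\|$ denotes its operator norm on $\ell^2$ if it acts boundedly, and $\|T_c\|=\infty$ otherwise. *)

theory Defs
  imports Complex_Main "HOL-Library.Extended_Real"
begin

text \<open>Sequences are functions nat => complex; index 0 is a dummy padding coordinate,
  the paper's indices j,k >= 1 are used literally. The matrix has zero row/column 0.\<close>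

definition Tc :: "(nat \<Rightarrow> complex) \<Rightarrow> nat \<Rightarrow> nat \<Rightarrow> complex" where
  "Tc c j k = (if j = 0 \<or> k = 0 then 0
               else if j = k then c k
               else if j < k then c k - c (k - 1)
               else 0)"

definition l2 :: "(nat \<Rightarrow> complex) set" where
  "l2 = {x. summable (\<lambda>k. (cmod (x k))\<^sup>2)}"

definition l2norm :: "(nat \<Rightarrow> complex) \<Rightarrow> real" where
  "l2norm x = sqrt (\<Sum>k. (cmod (x k))\<^sup>2)"

definition mat_apply :: "(nat \<Rightarrow> nat \<Rightarrow> complex) \<Rightarrow> (nat \<Rightarrow> complex) \<Rightarrow> nat \<Rightarrow> complex" where
  "mat_apply A x = (\<lambda>j. \<Sum>k. A j k * x k)"

definition acts_boundedly :: "(nat \<Rightarrow> nat \<Rightarrow> complex) \<Rightarrow> bool" where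
  "acts_boundedly A \<longleftrightarrow>
     (\<forall>x\<in>l2. (\<forall>j. summable (\<lambda>k. A j k * x k)) \<and> mat_apply A x \<in> l2) \<and>
     (\<exists>B. \<forall>x\<in>l2. l2norm (mat_apply A x) \<le> B * l2norm x)"

definition op_norm :: "(nat \<Rightarrow> nat \<Rightarrow> complex) \<Rightarrow> ereal" where
  "op_norm A = (if acts_boundedly A
     then Sup ((\<lambda>x. ereal (l2norm (mat_apply A x))) ` {x \<in> l2. l2norm x \<le> 1})
     else \<infinity>)"

end

theory Submission imports Defs "HOL-Analysis.Analysis" begin

lemma helm_real:
  fixes K a b c d :: real assumes "K > 0"
  shows "((K*a - c)\<^sup>2 + (K*b - d)\<^sup>2) / (K * (K + 1)) - (c\<^sup>2 + d\<^sup>2) / K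
       = a\<^sup>2 + b\<^sup>2 - ((a+c)\<^sup>2 + (b+d)\<^sup>2) / (K + 1)"
proof -
  have h1: "K + 1 \<noteq> 0" "K \<noteq> 0" using assms by auto
  have "((K*a - c)\<^sup>2 + (K*b - d)\<^sup>2) / (K * (K + 1)) - (c\<^sup>2 + d\<^sup>2) / K
     = (((K*a - c)\<^sup>2 + (K*b - d)\<^sup>2) - (c\<^sup>2 + d\<^sup>2) * (K+1)) / (K * (K + 1))"
    using h1 by (simp add: diff_divide_distrib)
  also have "\<dots> = ((a\<^sup>2 + b\<^sup>2) * (K+1) - ((a+c)\<^sup>2 + (b+d)\<^sup>2)) * K / (K * (K + 1))"
    by (simp add: algebra_simps power2_eq_square)
  also have "\<dots> = ((a\<^sup>2 + b\<^sup>2) * (K+1) - ((a+c)\<^sup>2 + (b+d)\<^sup>2)) / (K + 1)"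
    using h1 by (simp add: mult.commute[of _ K])
  also have "\<dots> = a\<^sup>2 + b\<^sup>2 - ((a+c)\<^sup>2 + (b+d)\<^sup>2) / (K + 1)"
    using h1 by (simp add: diff_divide_distrib)
  finally show ?thesis .
qed

lemma helm_alg:
  fixes u v :: complex and k :: nat assumes "k > 0"
  shows "(cmod (of_nat k * u - v))\<^sup>2 / (real k * (real k + 1)) - (cmod v)\<^sup>2 / real k
       = (cmod u)\<^sup>2 - (cmod (u + v))\<^sup>2 / (real k + 1)"
  using helm_real[of "real k" "Re u" "Re v" "Im u" "Im v"] assms
  unfolding cmod_power2 by (simp add: algebra_simps)

lemma helmert:
  fixes x :: "nat \<Rightarrow> complex"
  assumes "j \<le> n"
  shows "(\<Sum>i\<in>{j..<n}. (cmod (of_nat (n - i) * x i - (\<Sum>k\<in>{Suc i..n}. x k)))\<^sup>2 / (real (n - i) * real (Suc n - i)))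
    = (\<Sum>k\<in>{j..n}. (cmod (x k))\<^sup>2) - (cmod (\<Sum>k\<in>{j..n}. x k))\<^sup>2 / real (Suc n - j)"
  using assms
proof (induction j rule: inc_induct)
  case base then show ?case by simp
next
  case (step i)
  have e1: "{i..<n} = insert i {Suc i..<n}" using step by auto
  have e2: "{i..n} = insert i {Suc i..n}" using step by auto
  have k: "n - i > 0" using step by simp
  have r1: "real (Suc n - i) = real (n - i) + 1" using step by simp
  have r2: "Suc n - Suc i = n - i" by simp
  show ?case using step.IH helm_alg[OF k, of "x i" "\<Sum>k\<in>{Suc i..n}. x k"]
    unfolding e1 e2 r1 by (simp add: r2 r1 algebra_simps)
qed

definition dd :: "(nat \<Rightarrow> complex) \<Rightarrow> nat \<Rightarrow> complex" where
  "dd c k = c k - c (Suc k)"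
definition aa :: "(nat \<Rightarrow> complex) \<Rightarrow> nat \<Rightarrow> complex" where
  "aa c m = c m - 2 * c (Suc m) + c (Suc (Suc m))"

lemma aa_dd: "aa c m = dd c m - dd c (Suc m)"
  unfolding aa_def dd_def by simp

lemma dd_lim: assumes "c \<longlonglongrightarrow> 0" shows "dd c \<longlonglongrightarrow> 0"
proof -
  have "(\<lambda>k. c k - c (Suc k)) \<longlonglongrightarrow> 0 - 0"
    by (intro tendsto_diff assms LIMSEQ_Suc)
  then show ?thesis unfolding dd_def[abs_def] by simp
qed

lemma dd_sums: assumes "c \<longlonglongrightarrow> 0" shows "(\<lambda>i. aa c (i + n)) sums dd c n"
proof -
  have "(\<lambda>i. dd c (i + n)) \<longlonglongrightarrow> 0"
    using LIMSEQ_ignore_initial_segment[OF dd_lim[OF assms]] .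
  from telescope_sums'[OF this] show ?thesis by (simp add: aa_dd)
qed

lemma nD_lim:
  assumes c: "c \<longlonglongrightarrow> 0" and sm: "summable (\<lambda>m. real m * cmod (aa c m))"
  shows "(\<lambda>n. real n * cmod (dd c n)) \<longlonglongrightarrow> 0"
proof -
  let ?g = "\<lambda>m. real m * cmod (aa c m)"
  have sa: "summable (\<lambda>m. cmod (aa c m))"
  proof (rule summable_comparison_test'[OF sm, of 1])
    fix n :: nat assume "n \<ge> 1"
    then show "norm (cmod (aa c n)) \<le> real n * cmod (aa c n)"
      by (simp add: mult_le_cancel_right1)
  qed
  have tail: "(\<lambda>n. \<Sum>i. ?g (i + n)) \<longlonglongrightarrow> 0"
  proof -
    have "(\<lambda>n. suminf ?g - (\<Sum>i<n. ?g i)) \<longlonglongrightarrow> suminf ?g - suminf ?g"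
      by (intro tendsto_diff tendsto_const summable_LIMSEQ sm)
    moreover have "\<And>n. (\<Sum>i. ?g (i + n)) = suminf ?g - (\<Sum>i<n. ?g i)"
      by (rule suminf_minus_initial_segment[OF sm])
    ultimately show ?thesis by simp
  qed
  show ?thesis
  proof (rule Lim_null_comparison[OF _ tail], rule always_eventually, rule allI)
    fix n
    have s1: "summable (\<lambda>i. cmod (aa c (i + n)))"
      using summable_ignore_initial_segment[OF sa] .
    have s2: "summable (\<lambda>i. ?g (i + n))"
      using summable_ignore_initial_segment[OF sm] .
    have "cmod (dd c n) = cmod (\<Sum>i. aa c (i + n))"
      using sums_unique[OF dd_sums[OF c, of n]] by simp
    also have "\<dots> \<le> (\<Sum>i. cmod (aa c (i + n)))"
      by (rule summable_norm[OF s1])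
    finally have "real n * cmod (dd c n) \<le> real n * (\<Sum>i. cmod (aa c (i + n)))"
      by (simp add: mult_left_mono)
    also have "\<dots> = (\<Sum>i. real n * cmod (aa c (i + n)))"
      using suminf_mult[OF s1] by simp
    also have "\<dots> \<le> (\<Sum>i. ?g (i + n))"
      by (intro suminf_le summable_mult s1 s2) (simp add: mult_right_mono)
    finally show "norm (real n * cmod (dd c n)) \<le> (\<Sum>i. ?g (i + n))" by simp
  qed
qed

lemma D2_summable:
  assumes c: "c \<longlonglongrightarrow> 0" and sm: "summable (\<lambda>m. real m * cmod (aa c m))"
  shows "summable (\<lambda>n. (cmod (dd c n))\<^sup>2)"
proof -
  from nD_lim[OF c sm] have "Bseq (\<lambda>n. real n * cmod (dd c n))"
    by (intro convergent_imp_Bseq) (auto simp: convergent_def)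
  then obtain B where B: "\<And>n. norm (real n * cmod (dd c n)) \<le> B"
    by (auto simp: Bseq_def)
  have Bn: "0 \<le> B" using B[of 0] by simp
  have sg: "summable (\<lambda>n. B\<^sup>2 * inverse (real n ^ 2))"
    by (intro summable_mult inverse_power_summable) simp
  show ?thesis
  proof (rule summable_comparison_test'[OF sg, of 1])
    fix n :: nat assume n: "n \<ge> 1"
    then have np: "real n > 0" by simp
    have "real n * cmod (dd c n) \<le> B" using B[of n] by simp
    then have "cmod (dd c n) \<le> B / real n" using np by (simp add: field_simps)
    then have "(cmod (dd c n))\<^sup>2 \<le> (B / real n)\<^sup>2"
      by (intro power_mono) auto
    then show "norm ((cmod (dd c n))\<^sup>2) \<le> B\<^sup>2 * inverse (real n ^ 2)"
      by (metis divide_inverse power_divide real_norm_def abs_power2 norm_power)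
  qed
qed

definition zz :: "(nat \<Rightarrow> complex) \<Rightarrow> nat \<Rightarrow> nat \<Rightarrow> complex" where
  "zz x m j = (if 1 \<le> j \<and> j \<le> m then (of_nat (Suc m) - of_nat j) * x j - (\<Sum>k\<in>{Suc j..Suc m}. x k) else 0)"

lemma zz_bound:
  "(\<Sum>j\<in>{1..m}. (cmod (zz x m j))\<^sup>2) \<le> real m * real (Suc m) * (\<Sum>k\<in>{1..Suc m}. (cmod (x k))\<^sup>2)"
proof -
  let ?q = "\<lambda>i. real (Suc m - i) * real (Suc (Suc m) - i)"
  let ?t = "\<lambda>i. (cmod (of_nat (Suc m - i) * x i - (\<Sum>k\<in>{Suc i..Suc m}. x k)))\<^sup>2"
  have H: "(\<Sum>i\<in>{1..<Suc m}. ?t i / ?q i) = (\<Sum>k\<in>{1..Suc m}. (cmod (x k))\<^sup>2)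
     - (cmod (\<Sum>k\<in>{1..Suc m}. x k))\<^sup>2 / real (Suc (Suc m) - 1)"
    using helmert[of 1 "Suc m" x] by simp
  have "(\<Sum>i\<in>{1..<Suc m}. ?t i / ?q i) \<le> (\<Sum>k\<in>{1..Suc m}. (cmod (x k))\<^sup>2)"
    unfolding H by simp
  then have H2: "(\<Sum>i\<in>{1..m}. ?t i / ?q i) \<le> (\<Sum>k\<in>{1..Suc m}. (cmod (x k))\<^sup>2)"
    by (simp add: atLeastLessThanSuc_atLeastAtMost)
  have "(\<Sum>j\<in>{1..m}. (cmod (zz x m j))\<^sup>2) \<le> (\<Sum>i\<in>{1..m}. real m * real (Suc m) * (?t i / ?q i))"
  proof (rule sum_mono)
    fix i assume i: "i \<in> {1..m}"
    have z: "zz x m i = of_nat (Suc m - i) * x i - (\<Sum>k\<in>{Suc i..Suc m}. x k)"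
      using i by (simp add: zz_def of_nat_diff)
    have qp: "?q i > 0" using i by simp
    have ql: "?q i \<le> real m * real (Suc m)"
    proof -
      have "real (Suc m - i) \<le> real m" "real (Suc (Suc m) - i) \<le> real (Suc m)" using i by auto
      then show ?thesis by (intro mult_mono) auto
    qed
    have gen: "\<And>a b::real. a > 0 \<Longrightarrow> b = a * (b / a)" by simp
    have "?t i = ?q i * (?t i / ?q i)" by (rule gen[OF qp])
    also have "\<dots> \<le> real m * real (Suc m) * (?t i / ?q i)"
      by (intro mult_right_mono ql) (use qp in simp)
    finally show "(cmod (zz x m i))\<^sup>2 \<le> real m * real (Suc m) * (?t i / ?q i)" unfolding z .
  qed
  also have "\<dots> = real m * real (Suc m) * (\<Sum>i\<in>{1..m}. ?t i / ?q i)"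
    by (simp add: sum_distrib_left)
  also have "\<dots> \<le> real m * real (Suc m) * (\<Sum>k\<in>{1..Suc m}. (cmod (x k))\<^sup>2)"
    by (intro mult_left_mono H2) simp
  finally show ?thesis .
qed

lemma L2_minkowski:
  fixes f :: "nat \<Rightarrow> 'a \<Rightarrow> complex"
  shows "L2_set (\<lambda>j. cmod (\<Sum>m<M. f m j)) A \<le> (\<Sum>m<M. L2_set (\<lambda>j. cmod (f m j)) A)"
proof (induction M)
  case 0 then show ?case by (simp add: L2_set_0')
next
  case (Suc M)
  have "L2_set (\<lambda>j. cmod (\<Sum>m<Suc M. f m j)) A
     \<le> L2_set (\<lambda>j. cmod (\<Sum>m<M. f m j) + cmod (f M j)) A"
    by (rule L2_set_mono) (auto simp: norm_triangle_ineq)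
  also have "\<dots> \<le> L2_set (\<lambda>j. cmod (\<Sum>m<M. f m j)) A + L2_set (\<lambda>j. cmod (f M j)) A"
    by (rule L2_set_triangle_ineq)
  also have "\<dots> \<le> (\<Sum>m<Suc M. L2_set (\<lambda>j. cmod (f m j)) A)"
    using Suc.IH by simp
  finally show ?case .
qed

lemma rep_partial:
  assumes j: "1 \<le> j" and N: "j \<le> N"
  shows "(\<Sum>m<N. aa c m * zz x m j) =
    (c j - c N - (of_nat N - of_nat j) * dd c N) * x j - (\<Sum>k\<in>{Suc j..N}. dd c (k - 1) * x k)
    + dd c N * (\<Sum>k\<in>{Suc j..N}. x k)"
  using N
proof (induction N rule: dec_induct)
  case base
  have "(\<Sum>m<j. aa c m * zz x m j) = 0"
    by (intro sum.neutral) (auto simp: zz_def)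
  then show ?case by simp
next
  case (step N)
  have zN: "zz x N j = (of_nat (Suc N) - of_nat j) * x j - (\<Sum>k\<in>{Suc j..N}. x k) - x (Suc N)"
    using step j by (simp add: zz_def)
  have s1: "(\<Sum>k\<in>{Suc j..Suc N}. x k) = (\<Sum>k\<in>{Suc j..N}. x k) + x (Suc N)"
    using step by simp
  have s2: "(\<Sum>k\<in>{Suc j..Suc N}. dd c (k - 1) * x k) = (\<Sum>k\<in>{Suc j..N}. dd c (k - 1) * x k) + dd c N * x (Suc N)"
    using step by simp
  have cS: "c (Suc N) = c N - dd c N" by (simp add: dd_def)
  show ?case
  proof -
    have "(\<Sum>m<Suc N. aa c m * zz x m j) = (\<Sum>m<N. aa c m * zz x m j) + aa c N * zz x N j"
      by simp
    then show ?thesis unfolding step.IH zN s1 s2 cS aa_dd[of c N] of_nat_Suc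
      by (simp add: algebra_simps)
  qed
qed

definition hh :: "(nat \<Rightarrow> complex) \<Rightarrow> (nat \<Rightarrow> complex) \<Rightarrow> nat \<Rightarrow> nat \<Rightarrow> complex" where
  "hh c x j k = (if j < k then dd c (k - 1) * x k else 0)"

lemma uv_bound: "(u::real) * v \<le> (u\<^sup>2 + v\<^sup>2) / 2"
  using sum_squares_bound[of u v] by simp

lemma hh_summable:
  assumes D2: "summable (\<lambda>n. (cmod (dd c n))\<^sup>2)" and sx: "summable (\<lambda>k. (cmod (x k))\<^sup>2)"
  shows "summable (hh c x j)"
proof -
  have sD1: "summable (\<lambda>k. (cmod (dd c (k - 1)))\<^sup>2)"
    by (subst summable_Suc_iff[symmetric]) (simp add: D2)
  have sb: "summable (\<lambda>k. ((cmod (dd c (k - 1)))\<^sup>2 + (cmod (x k))\<^sup>2) / 2)"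
    by (intro summable_divide summable_add sD1 sx)
  show ?thesis
  proof (rule summable_comparison_test'[OF sb, of 0])
    fix k :: nat
    show "norm (hh c x j k) \<le> ((cmod (dd c (k - 1)))\<^sup>2 + (cmod (x k))\<^sup>2) / 2"
      using uv_bound[of "cmod (dd c (k - 1))" "cmod (x k)"]
      by (auto simp: hh_def norm_mult)
  qed
qed

lemma Tc_row: assumes "1 \<le> j"
  shows "Tc c j k * x k = (if k = j then c j * x j else 0) - hh c x j k"
  using assms by (cases k) (auto simp: Tc_def hh_def dd_def algebra_simps)

lemma t_le: "(t::real) \<le> 1 + t\<^sup>2"
proof -
  have "2 * t \<le> t\<^sup>2 + 1" using sum_squares_bound[of t 1] by simp
  then show ?thesis using zero_le_power2[of t] by linarith
qed

lemma rep_sums: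
  assumes c: "c \<longlonglongrightarrow> 0" and sm: "summable (\<lambda>m. real m * cmod (aa c m))"
    and sx: "summable (\<lambda>k. (cmod (x k))\<^sup>2)"
  shows "(\<lambda>m. aa c m * zz x m j) sums mat_apply (Tc c) x j"
proof (cases "j = 0")
  case True
  then show ?thesis by (simp add: zz_def mat_apply_def Tc_def)
next
  case False
  then have j: "1 \<le> j" by simp
  have D2: "summable (\<lambda>n. (cmod (dd c n))\<^sup>2)" by (rule D2_summable[OF c sm])
  have hs: "summable (hh c x j)" by (rule hh_summable[OF D2 sx])
  have rs: "(\<lambda>k. Tc c j k * x k) sums (c j * x j - suminf (hh c x j))"
    unfolding Tc_row[OF j] by (intro sums_diff sums_single summable_sums hs)
  have yj: "mat_apply (Tc c) x j = c j * x j - suminf (hh c x j)"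
    unfolding mat_apply_def using sums_unique[OF rs] by simp
  define X where "X = (\<Sum>k. (cmod (x k))\<^sup>2)"
  have nDc: "(\<lambda>N. of_nat N * dd c N) \<longlonglongrightarrow> 0"
    by (subst tendsto_norm_zero_iff[symmetric]) (simp add: norm_mult nD_lim[OF c sm])
  have ddl: "dd c \<longlonglongrightarrow> 0" by (rule dd_lim[OF c])
  have L2: "(\<lambda>N. (of_nat N - of_nat j) * dd c N) \<longlonglongrightarrow> 0"
  proof -
    have "(\<lambda>N. of_nat N * dd c N - of_nat j * dd c N) \<longlonglongrightarrow> 0 - of_nat j * 0"
      by (intro tendsto_diff nDc tendsto_mult tendsto_const ddl)
    then show ?thesis by (simp add: algebra_simps)
  qed
  have L3: "(\<lambda>N. \<Sum>k\<in>{Suc j..N}. dd c (k - 1) * x k) \<longlonglongrightarrow> suminf (hh c x j)"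
  proof -
    have e: "(\<Sum>k\<in>{Suc j..N}. dd c (k - 1) * x k) = (\<Sum>k<Suc N. hh c x j k)" for N
    proof -
      have "{k \<in> {..<Suc N}. j < k} = {Suc j..N}" by auto
      then show ?thesis unfolding hh_def
        using sum.inter_filter[of "{..<Suc N}" "\<lambda>k. dd c (k - 1) * x k" "\<lambda>k. j < k"] by simp
    qed
    show ?thesis unfolding e using LIMSEQ_Suc[OF summable_LIMSEQ[OF hs]] .
  qed
  have L4: "(\<lambda>N. dd c N * (\<Sum>k\<in>{Suc j..N}. x k)) \<longlonglongrightarrow> 0"
  proof (rule Lim_null_comparison[where g = "\<lambda>N. real N * cmod (dd c N) + X * cmod (dd c N)"])
    show "(\<lambda>N. real N * cmod (dd c N) + X * cmod (dd c N)) \<longlonglongrightarrow> 0"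
      using tendsto_add[OF nD_lim[OF c sm] tendsto_mult[OF tendsto_const[of X] tendsto_norm_zero[OF ddl]]]
      by simp
    show "\<forall>\<^sub>F N in sequentially. norm (dd c N * (\<Sum>k\<in>{Suc j..N}. x k)) \<le> real N * cmod (dd c N) + X * cmod (dd c N)"
    proof (rule always_eventually, rule allI)
      fix N
      have "(\<Sum>k\<in>{Suc j..N}. cmod (x k)) \<le> (\<Sum>k\<in>{Suc j..N}. 1 + (cmod (x k))\<^sup>2)"
        by (intro sum_mono t_le)
      also have "\<dots> = real (card {Suc j..N}) + (\<Sum>k\<in>{Suc j..N}. (cmod (x k))\<^sup>2)"
        by (simp add: sum.distrib)
      also have "\<dots> \<le> real N + X"
      proof (rule add_mono)
        show "real (card {Suc j..N}) \<le> real N" by simp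
        show "(\<Sum>k\<in>{Suc j..N}. (cmod (x k))\<^sup>2) \<le> X"
          unfolding X_def by (intro sum_le_suminf sx) auto
      qed
      finally have b: "(\<Sum>k\<in>{Suc j..N}. cmod (x k)) \<le> real N + X" .
      have "norm (dd c N * (\<Sum>k\<in>{Suc j..N}. x k)) \<le> cmod (dd c N) * (\<Sum>k\<in>{Suc j..N}. cmod (x k))"
        by (simp add: norm_mult mult_left_mono norm_sum)
      also have "\<dots> \<le> cmod (dd c N) * (real N + X)"
        by (intro mult_left_mono b) simp
      finally show "norm (dd c N * (\<Sum>k\<in>{Suc j..N}. x k)) \<le> real N * cmod (dd c N) + X * cmod (dd c N)"
        by (simp add: algebra_simps)
    qed
  qed
  have F: "(\<lambda>N. (c j - c N - (of_nat N - of_nat j) * dd c N) * x j - (\<Sum>k\<in>{Suc j..N}. dd c (k - 1) * x k)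
    + dd c N * (\<Sum>k\<in>{Suc j..N}. x k)) \<longlonglongrightarrow> (c j - 0 - 0) * x j - suminf (hh c x j) + 0"
    by (intro tendsto_intros c L2 L3 L4)
  have ev: "\<forall>\<^sub>F N in sequentially. (c j - c N - (of_nat N - of_nat j) * dd c N) * x j - (\<Sum>k\<in>{Suc j..N}. dd c (k - 1) * x k)
    + dd c N * (\<Sum>k\<in>{Suc j..N}. x k) = (\<Sum>m<N. aa c m * zz x m j)"
    using eventually_ge_at_top[of j] by eventually_elim (simp add: rep_partial[OF j])
  show ?thesis unfolding sums_def yj using Lim_transform_eventually[OF F ev] by simp
qed

lemma zzL2:
  assumes sx: "summable (\<lambda>k. (cmod (x k))\<^sup>2)"
  shows "L2_set (\<lambda>j. cmod (zz x m j)) {..<n} \<le> sqrt (real m * real (Suc m)) * sqrt (\<Sum>k. (cmod (x k))\<^sup>2)"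
proof -
  let ?g = "\<lambda>j. (cmod (zz x m j))\<^sup>2"
  have "sum ?g {..<n} = sum ?g ({..<n} \<inter> {1..m})"
    by (rule sum.mono_neutral_right) (auto simp: zz_def)
  also have "\<dots> \<le> sum ?g {1..m}"
    by (rule sum_mono2) auto
  also have "\<dots> \<le> real m * real (Suc m) * (\<Sum>k\<in>{1..Suc m}. (cmod (x k))\<^sup>2)"
    by (rule zz_bound)
  also have "\<dots> \<le> real m * real (Suc m) * (\<Sum>k. (cmod (x k))\<^sup>2)"
    by (intro mult_left_mono sum_le_suminf sx) auto
  finally have "sum ?g {..<n} \<le> real m * real (Suc m) * (\<Sum>k. (cmod (x k))\<^sup>2)" .
  then have "sqrt (sum ?g {..<n}) \<le> sqrt (real m * real (Suc m) * (\<Sum>k. (cmod (x k))\<^sup>2))"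
    by (rule real_sqrt_le_mono)
  then show ?thesis unfolding L2_set_def real_sqrt_mult .
qed


lemma main_x:
  assumes c: "c \<longlonglongrightarrow> 0" and sG: "summable (\<lambda>m. sqrt (real m * real (Suc m)) * cmod (aa c m))"
    and x: "x \<in> l2"
  shows "(\<forall>j. summable (\<lambda>k. Tc c j k * x k)) \<and> mat_apply (Tc c) x \<in> l2 \<and>
    l2norm (mat_apply (Tc c) x) \<le> (\<Sum>m. sqrt (real m * real (Suc m)) * cmod (aa c m)) * l2norm x"
proof -
  define w where "w m = sqrt (real m * real (Suc m))" for m
  define S where "S = (\<Sum>m. w m * cmod (aa c m))"
  have sG': "summable (\<lambda>m. w m * cmod (aa c m))" using sG by (simp add: w_def)
  have S0: "0 \<le> S" unfolding S_def by (intro suminf_nonneg sG') (simp add: w_def)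
  have sx: "summable (\<lambda>k. (cmod (x k))\<^sup>2)" using x by (simp add: l2_def)
  define X where "X = (\<Sum>k. (cmod (x k))\<^sup>2)"
  have X0: "0 \<le> X" unfolding X_def by (intro suminf_nonneg sx) simp
  have sm: "summable (\<lambda>m. real m * cmod (aa c m))"
  proof (rule summable_comparison_test'[OF sG', of 0])
    fix m :: nat
    have "real m = sqrt (real m * real m)" by simp
    also have "\<dots> \<le> w m" unfolding w_def by (intro real_sqrt_le_mono mult_left_mono) simp_all
    finally show "norm (real m * cmod (aa c m)) \<le> w m * cmod (aa c m)"
      by (simp add: mult_right_mono)
  qed
  let ?y = "mat_apply (Tc c) x"
  have rep: "(\<lambda>m. aa c m * zz x m j) sums ?y j" for j
    by (rule rep_sums[OF c sm sx])
  have rows: "summable (\<lambda>k. Tc c j k * x k)" for j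
  proof (cases "j = 0")
    case True then show ?thesis by (simp add: Tc_def)
  next
    case False
    then have j: "1 \<le> j" by simp
    have hs: "summable (hh c x j)" by (rule hh_summable[OF D2_summable[OF c sm] sx])
    show ?thesis
      unfolding Tc_row[OF j] by (intro summable_diff hs sums_summable[OF sums_single])
  qed
  have bnd: "L2_set (\<lambda>j. cmod (?y j)) {..<n} \<le> S * sqrt X" for n
  proof -
    let ?P = "\<lambda>M. L2_set (\<lambda>j. cmod (\<Sum>m<M. aa c m * zz x m j)) {..<n}"
    have lim: "?P \<longlonglongrightarrow> L2_set (\<lambda>j. cmod (?y j)) {..<n}"
      unfolding L2_set_def
      by (intro tendsto_intros rep[unfolded sums_def])
    have "?P M \<le> S * sqrt X" for M
    proof -
      have "?P M \<le> (\<Sum>m<M. L2_set (\<lambda>j. cmod (aa c m * zz x m j)) {..<n})"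
        by (rule L2_minkowski)
      also have "\<dots> = (\<Sum>m<M. cmod (aa c m) * L2_set (\<lambda>j. cmod (zz x m j)) {..<n})"
        by (simp add: norm_mult L2_set_right_distrib)
      also have "\<dots> \<le> (\<Sum>m<M. cmod (aa c m) * (w m * sqrt X))"
      proof (rule sum_mono)
        fix m
        show "cmod (aa c m) * L2_set (\<lambda>j. cmod (zz x m j)) {..<n} \<le> cmod (aa c m) * (w m * sqrt X)"
          using zzL2[OF sx, of m n] unfolding w_def X_def by (intro mult_left_mono) simp_all
      qed
      also have "\<dots> = (\<Sum>m<M. w m * cmod (aa c m)) * sqrt X"
        unfolding sum_distrib_right by (intro sum.cong refl) (simp add: algebra_simps)
      also have "\<dots> \<le> S * sqrt X"
        unfolding S_def by (intro mult_right_mono sum_le_suminf sG') (simp_all add: w_def X0)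
      finally show ?thesis .
    qed
    then show ?thesis by (intro LIMSEQ_le_const2[OF lim]) auto
  qed
  have bnd2: "(\<Sum>j<n. (cmod (?y j))\<^sup>2) \<le> (S * sqrt X)\<^sup>2" for n
    using sqrt_le_D[OF bnd[of n, unfolded L2_set_def]] .
  have sy: "summable (\<lambda>j. (cmod (?y j))\<^sup>2)"
    by (rule summableI_nonneg_bounded[OF _ bnd2]) simp
  have "(\<Sum>j. (cmod (?y j))\<^sup>2) \<le> (S * sqrt X)\<^sup>2"
    by (rule suminf_le_const[OF sy bnd2])
  then have "l2norm ?y \<le> sqrt ((S * sqrt X)\<^sup>2)"
    unfolding l2norm_def by (rule real_sqrt_le_mono)
  also have "\<dots> = S * l2norm x"
    using S0 X0 by (simp add: l2norm_def X_def[symmetric])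
  finally show ?thesis using rows sy by (simp add: l2_def S_def w_def)
qed

theorem theorem2:
  fixes c :: "nat \<Rightarrow> complex"
  assumes "c \<longlonglongrightarrow> 0"
  shows "op_norm (Tc c) \<le>
    (\<Sum>k. ereal (sqrt (real (Suc k) * real (Suc k + 1)) *
                  cmod (c (k + 3) - 2 * c (k + 2) + c (k + 1))))"
proof -
  define G where "G m = sqrt (real m * real (Suc m)) * cmod (aa c m)" for m
  have fG: "sqrt (real (Suc k) * real (Suc k + 1)) * cmod (c (k + 3) - 2 * c (k + 2) + c (k + 1)) = G (Suc k)" for k
  proof -
    have e3: "c (k + 3) = c (Suc (Suc (Suc k)))" by (simp add: numeral_3_eq_3)
    show ?thesis unfolding G_def aa_def by (simp add: e3 algebra_simps)
  qed
  show ?thesis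
  proof (cases "(\<Sum>k. ereal (G (Suc k))) = \<infinity>")
    case True
    then show ?thesis unfolding fG by simp
  next
    case False
    have G0: "\<And>m. 0 \<le> G m" unfolding G_def by simp
    have sGs: "summable (\<lambda>k. G (Suc k))"
      using summable_real_of_ereal[of "\<lambda>k. ereal (G (Suc k))"] False G0 by simp
    then have sG: "summable G" by (simp add: summable_Suc_iff)
    have eqS: "(\<Sum>k. G (Suc k)) = suminf G"
      using suminf_split_head[OF sG] by (simp add: G_def)
    define S where "S = suminf G"
    have S0: "0 \<le> S" unfolding S_def by (intro suminf_nonneg sG G0)
    have rhs: "(\<Sum>k. ereal (G (Suc k))) = ereal S"
      using suminf_ereal'[OF sGs] eqS by (simp add: S_def)
    have Seq: "(\<Sum>m. sqrt (real m * real (Suc m)) * cmod (aa c m)) = S"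
      unfolding S_def G_def[abs_def] ..
    have mx: "\<And>x. x \<in> l2 \<Longrightarrow> (\<forall>j. summable (\<lambda>k. Tc c j k * x k)) \<and> mat_apply (Tc c) x \<in> l2 \<and>
        l2norm (mat_apply (Tc c) x) \<le> S * l2norm x"
      using main_x[OF assms sG[unfolded G_def[abs_def]]] unfolding Seq by blast
    have ab: "acts_boundedly (Tc c)"
      unfolding acts_boundedly_def
      by (intro conjI ballI exI[of _ S]) (use mx in blast)+
    have "op_norm (Tc c) \<le> ereal S"
      unfolding op_norm_def using ab
    proof (simp only: if_True, intro SUP_least)
      fix x assume x: "x \<in> {x \<in> l2. l2norm x \<le> 1}"
      then have "l2norm (mat_apply (Tc c) x) \<le> S * l2norm x" using mx by blast
      also have "\<dots> \<le> S * 1" using x S0 by (intro mult_left_mono) auto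
      finally show "ereal (l2norm (mat_apply (Tc c) x)) \<le> ereal S" by simp
    qed
    then show ?thesis unfolding fG rhs .
  qed
qed

end
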